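(* Let $\mathcal{SP}$ be the class of split graphs. Then: (i) $R_1^{\mathcal{SP}}(4,5)=7$ and $R_1^{\mathcal{SP}}(4,6)=8$; (ii) $R_2^{\mathcal{SP}}(6,7)=11$ and $R_2^{\mathcal{SP}}(6,8)=12$; (iii) $R_2^{\mathcal{SP}}(5,6)=8$ and $R_2^{\mathcal{SP}}(5,7)=9$; (iv) $R_2^{\mathcal{SP}}(5,j)=j+3$ for all integers $8\leq j\leq 12$.
   Context: All graphs are finite and simple. For a graph $G$ and a nonnegative integer $k$, a $k$-sparse $j$-set is a set of $j$ vertices of $G$ inducing a subgraph of maximum degree at most $k$; a $k$-dense $i$-set is a set of $i$ vertices of $G$ that is $k$-sparse in the complement of $G$. For a graph class $\mathcal{G}$, $R_k^{\mathcal{G}}(i,j)$ is the smallest natural number $n$ such that every graph on $n$ vertices in $\mathcal{G}$ has either a $k$-dense $i$-set or a $k$-sparse $j$-set. A split graph is a graph whose vertex set can be partitioned into a clique and an independent set. *)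

theory Defs
  imports Main
begin

definition simple_graph :: "'a set \<Rightarrow> ('a \<Rightarrow> 'a \<Rightarrow> bool) \<Rightarrow> bool" where
  "simple_graph V E \<longleftrightarrow> finite V \<and> (\<forall>u v. E u v \<longrightarrow> u \<in> V \<and> v \<in> V \<and> u \<noteq> v \<and> E v u)"

definition split_graph :: "'a set \<Rightarrow> ('a \<Rightarrow> 'a \<Rightarrow> bool) \<Rightarrow> bool" where
  "split_graph V E \<longleftrightarrow> (\<exists>K I. K \<union> I = V \<and> K \<inter> I = {} \<and>
      (\<forall>u\<in>K. \<forall>v\<in>K. u \<noteq> v \<longrightarrow> E u v) \<and>
      (\<forall>u\<in>I. \<forall>v\<in>I. \<not> E u v))"

definition k_sparse :: "('a \<Rightarrow> 'a \<Rightarrow> bool) \<Rightarrow> nat \<Rightarrow> 'a set \<Rightarrow> bool" where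
  "k_sparse E k S \<longleftrightarrow> (\<forall>v\<in>S. card {u\<in>S. E v u} \<le> k)"

definition compl_graph :: "('a \<Rightarrow> 'a \<Rightarrow> bool) \<Rightarrow> 'a \<Rightarrow> 'a \<Rightarrow> bool" where
  "compl_graph E u v \<longleftrightarrow> u \<noteq> v \<and> \<not> E u v"

definition k_dense :: "('a \<Rightarrow> 'a \<Rightarrow> bool) \<Rightarrow> nat \<Rightarrow> 'a set \<Rightarrow> bool" where
  "k_dense E k S \<longleftrightarrow> k_sparse (compl_graph E) k S"

definition R_split :: "nat \<Rightarrow> nat \<Rightarrow> nat \<Rightarrow> nat" where
  "R_split k i j = (LEAST n. \<forall>E :: nat \<Rightarrow> nat \<Rightarrow> bool.
      simple_graph {0..<n} E \<and> split_graph {0..<n} E \<longrightarrow>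
      (\<exists>S\<subseteq>{0..<n}. card S = i \<and> k_dense E k S) \<or>
      (\<exists>S\<subseteq>{0..<n}. card S = j \<and> k_sparse E k S))"

end

theory Submission imports Defs begin

lemma sg_facts:
  assumes "simple_graph V E"
  shows "finite V" "\<And>u v. E u v \<Longrightarrow> E v u" "\<And>u. \<not> E u u" "\<And>u v. E u v \<Longrightarrow> u \<in> V \<and> v \<in> V"
  using assms unfolding simple_graph_def by blast+

lemma dense_union:
  assumes sym: "\<And>u v. E u v \<Longrightarrow> E v u"
    and cl: "\<forall>u\<in>K. \<forall>v\<in>K. u\<noteq>v \<longrightarrow> E u v"
    and ind: "\<forall>u\<in>W. \<forall>v\<in>W. \<not> E u v"
    and fin: "finite K" "finite W" and dj: "K \<inter> W = {}"
    and cW: "card W \<le> k"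
    and deg: "\<forall>w\<in>W. card W - 1 + card {v\<in>K. \<not> E w v} \<le> k"
  shows "k_dense E k (K \<union> W)"
  unfolding k_dense_def k_sparse_def
proof
  fix x assume x: "x \<in> K \<union> W"
  show "card {u \<in> K \<union> W. compl_graph E x u} \<le> k"
  proof (cases "x \<in> K")
    case True
    have "{u \<in> K \<union> W. compl_graph E x u} \<subseteq> W"
      using True cl unfolding compl_graph_def by blast
    then have "card {u \<in> K \<union> W. compl_graph E x u} \<le> card W"
      by (simp add: card_mono fin)
    then show ?thesis using cW by linarith
  next
    case False
    then have xW: "x \<in> W" using x by blast
    have "{u \<in> K \<union> W. compl_graph E x u} \<subseteq> (W - {x}) \<union> {v\<in>K. \<not> E x v}"
      unfolding compl_graph_def by blast
    then have "card {u \<in> K \<union> W. compl_graph E x u} \<le> card ((W - {x}) \<union> {v\<in>K. \<not> E x v})"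
      by (simp add: card_mono fin)
    also have "\<dots> \<le> card (W - {x}) + card {v\<in>K. \<not> E x v}"
      by (rule card_Un_le)
    also have "\<dots> = card W - 1 + card {v\<in>K. \<not> E x v}"
      using xW fin by simp
    also have "\<dots> \<le> k" using deg xW by blast
    finally show ?thesis .
  qed
qed

lemma sparse_union:
  assumes sym: "\<And>u v. E u v \<Longrightarrow> E v u"
    and ind: "\<forall>u\<in>I. \<forall>v\<in>I. \<not> E u v"
    and irr: "\<And>u. \<not> E u u"
    and fin: "finite I" "finite U" and dj: "I \<inter> U = {}"
    and cU: "card U \<le> k"
    and deg: "\<forall>u\<in>U. card U - 1 + card {w\<in>I. E u w} \<le> k"
  shows "k_sparse E k (I \<union> U)"
  unfolding k_sparse_def
proof
  fix x assume x: "x \<in> I \<union> U"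
  show "card {u \<in> I \<union> U. E x u} \<le> k"
  proof (cases "x \<in> I")
    case True
    have "{u \<in> I \<union> U. E x u} \<subseteq> U"
      using True ind by blast
    then have "card {u \<in> I \<union> U. E x u} \<le> card U"
      by (simp add: card_mono fin)
    then show ?thesis using cU by linarith
  next
    case False
    then have xU: "x \<in> U" using x by blast
    have "{u \<in> I \<union> U. E x u} \<subseteq> (U - {x}) \<union> {w\<in>I. E x w}"
      using irr by blast
    then have "card {u \<in> I \<union> U. E x u} \<le> card ((U - {x}) \<union> {w\<in>I. E x w})"
      by (simp add: card_mono fin)
    also have "\<dots> \<le> card (U - {x}) + card {w\<in>I. E x w}"
      by (rule card_Un_le)
    also have "\<dots> = card U - 1 + card {w\<in>I. E x w}"
      using xU fin by simp
    also have "\<dots> \<le> k" using deg xU by blast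
    finally show ?thesis .
  qed
qed

lemma double_count:
  assumes sym: "\<And>u v. E u v \<Longrightarrow> E v u" and fin: "finite K" "finite I"
  shows "(\<Sum>v\<in>K. card {w\<in>I. E v w}) = (\<Sum>w\<in>I. card {v\<in>K. E w v})"
proof -
  have "(\<Sum>v\<in>K. card {w\<in>I. E v w}) = (\<Sum>v\<in>K. \<Sum>w\<in>I. if E v w then 1 else 0)"
    using fin by (simp add: sum.If_cases Int_def conj_commute)
  also have "\<dots> = (\<Sum>w\<in>I. \<Sum>v\<in>K. if E v w then 1 else 0)"
    by (rule sum.swap)
  also have "\<dots> = (\<Sum>w\<in>I. \<Sum>v\<in>K. if E w v then 1 else 0)"
  proof -
    have e: "\<And>v w. (if E v w then 1::nat else 0) = (if E w v then 1 else 0)" using sym by metis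
    show ?thesis by (rule sum.cong[OF refl], rule sum.cong[OF refl], rule e)
  qed
  also have "\<dots> = (\<Sum>w\<in>I. card {v\<in>K. E w v})"
    using fin by (simp add: sum.If_cases Int_def conj_commute)
  finally show ?thesis .
qed

lemma clique_dense:
  assumes "\<forall>u\<in>K. \<forall>v\<in>K. u\<noteq>v \<longrightarrow> E u v" "S \<subseteq> K"
  shows "k_dense E k S"
  unfolding k_dense_def k_sparse_def
proof
  fix v assume "v \<in> S"
  then have "{u \<in> S. compl_graph E v u} = {}" using assms by (auto simp: compl_graph_def)
  then show "card {u \<in> S. compl_graph E v u} \<le> k" by (metis card.empty le0)
qed

lemma indep_sparse:
  assumes "\<forall>u\<in>I. \<forall>v\<in>I. \<not> E u v" "S \<subseteq> I"
  shows "k_sparse E k S"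
  unfolding k_sparse_def
proof
  fix v assume "v \<in> S"
  then have "{u \<in> S. E v u} = {}" using assms by auto
  then show "card {u \<in> S. E v u} \<le> k" by (metis card.empty le0)
qed


lemma card_split_filter:
  assumes "finite A"
  shows "card {x\<in>A. P x} + card {x\<in>A. \<not> P x} = card A"
proof -
  have "A = {x\<in>A. P x} \<union> {x\<in>A. \<not> P x}" by blast
  moreover have "{x\<in>A. P x} \<inter> {x\<in>A. \<not> P x} = {}" by blast
  ultimately show ?thesis using assms
    by (metis (no_types, lifting) card_Un_disjoint finite_Un)
qed

lemma no_sparse_set:
  assumes cl: "\<forall>u\<in>K. \<forall>v\<in>K. u\<noteq>v \<longrightarrow> E u v"
    and fin: "finite K" "finite I" and dj: "K \<inter> I = {}"
    and S: "S \<subseteq> K \<union> I" "card S = j"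
    and D: "card (K - D) + card I < j"
    and deg: "\<forall>v\<in>K \<inter> D. k + card I + 1 < card {w\<in>I. E v w} + j"
  shows "\<not> k_sparse E k S"
proof
  assume sp: "k_sparse E k S"
  have finS: "finite S" using S fin finite_subset by blast
  have SU: "S = (S \<inter> K) \<union> (S \<inter> I)" using S by blast
  have "card ((S \<inter> K) \<union> (S \<inter> I)) = card (S \<inter> K) + card (S \<inter> I)"
    by (rule card_Un_disjoint) (use finS dj in auto)
  then have cS: "card (S \<inter> K) + card (S \<inter> I) = j" using SU S(2) by simp
  have "card (S \<inter> I) \<le> card I" using fin by (simp add: card_mono)
  then have "card (K - D) < card (S \<inter> K)" using cS D by linarith
  then have "\<not> (S \<inter> K \<subseteq> K - D)"
  proof (intro notI)
    assume "S \<inter> K \<subseteq> K - D"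
    then have "card (S \<inter> K) \<le> card (K - D)" using fin by (simp add: card_mono)
    then show False using \<open>card (K - D) < card (S \<inter> K)\<close> by linarith
  qed
  then obtain v where v: "v \<in> S" "v \<in> K" "v \<in> D" by blast
  let ?N = "{w\<in>I. E v w}"
  have N1: "?N \<subseteq> (S \<inter> ?N) \<union> (I - S)" by blast
  have "card ?N \<le> card ((S \<inter> ?N) \<union> (I - S))"
    using fin by (intro card_mono) auto
  also have "\<dots> \<le> card (S \<inter> ?N) + card (I - S)" by (rule card_Un_le)
  finally have "card ?N \<le> card (S \<inter> ?N) + card (I - S)" .
  moreover have "card (I - S) + card (S \<inter> I) = card I"
  proof -
    have "card (I - S) = card I - card (I \<inter> S)" using fin by (simp add: card_Diff_subset_Int)
    moreover have "card (I \<inter> S) \<le> card I" using fin by (simp add: card_mono)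
    moreover have "I \<inter> S = S \<inter> I" by blast
    ultimately show ?thesis by simp
  qed
  ultimately have A: "card ?N + card (S \<inter> I) \<le> card (S \<inter> ?N) + card I" by linarith
  have sub: "((S \<inter> K) - {v}) \<union> (S \<inter> ?N) \<subseteq> {u\<in>S. E v u}"
    using cl v by auto
  have "((S \<inter> K) - {v}) \<inter> (S \<inter> ?N) = {}" using dj by blast
  then have "card (((S \<inter> K) - {v}) \<union> (S \<inter> ?N)) = card ((S \<inter> K) - {v}) + card (S \<inter> ?N)"
    using finS by (simp add: card_Un_disjoint)
  moreover have "card ((S \<inter> K) - {v}) = card (S \<inter> K) - 1" using v finS by simp
  moreover have "card (((S \<inter> K) - {v}) \<union> (S \<inter> ?N)) \<le> card {u\<in>S. E v u}"
    using sub finS by (simp add: card_mono)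
  moreover have "card {u\<in>S. E v u} \<le> k" using sp v unfolding k_sparse_def by blast
  moreover have "card (S \<inter> K) \<ge> 1"
  proof -
    have "S \<inter> K \<noteq> {}" using v by blast
    then show ?thesis using finS by (simp add: Suc_leI card_gt_0_iff)
  qed
  moreover have "k + card I + 1 < card ?N + j" using deg v by blast
  ultimately show False using A cS by linarith
qed

lemma no_dense_set:
  assumes ind: "\<forall>u\<in>I. \<forall>v\<in>I. \<not> E u v"
    and fin: "finite K" "finite I" and dj: "K \<inter> I = {}"
    and S: "S \<subseteq> K \<union> I" "card S = i"
    and D: "card (I - D) + card K < i"
    and deg: "\<forall>w\<in>I \<inter> D. k + card K + 1 < card {v\<in>K. \<not> E w v} + i"
  shows "\<not> k_dense E k S"
proof -
  have cl: "\<forall>u\<in>I. \<forall>v\<in>I. u\<noteq>v \<longrightarrow> compl_graph E u v"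
    using ind unfolding compl_graph_def by blast
  have eq: "\<And>w. w \<in> I \<Longrightarrow> {v\<in>K. compl_graph E w v} = {v\<in>K. \<not> E w v}"
    using dj unfolding compl_graph_def by blast
  have "\<not> k_sparse (compl_graph E) k S"
    apply (rule no_sparse_set[where K=I and I=K and D=D])
    using cl fin dj S D deg eq by auto
  then show ?thesis unfolding k_dense_def .
qed


definition good :: "nat \<Rightarrow> nat \<Rightarrow> nat \<Rightarrow> nat \<Rightarrow> bool" where
  "good k i j n \<longleftrightarrow> (\<forall>E :: nat \<Rightarrow> nat \<Rightarrow> bool.
      simple_graph {0..<n} E \<and> split_graph {0..<n} E \<longrightarrow>
      (\<exists>S\<subseteq>{0..<n}. card S = i \<and> k_dense E k S) \<or>
      (\<exists>S\<subseteq>{0..<n}. card S = j \<and> k_sparse E k S))"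

lemma R_split_good: "R_split k i j = (LEAST n. good k i j n)"
  unfolding R_split_def good_def ..

lemma R_eq:
  assumes "good k i j n" "\<And>m. m < n \<Longrightarrow> \<not> good k i j m"
  shows "R_split k i j = n"
  unfolding R_split_good
  by (rule Least_equality) (use assms not_less in blast)+

lemma bad_mono:
  assumes bad: "\<not> good k i j N" and mN: "m \<le> N"
  shows "\<not> good k i j m"
proof
  assume g: "good k i j m"
  from bad obtain E where sg: "simple_graph {0..<N} E" and sp: "split_graph {0..<N} E"
    and nd: "\<not> (\<exists>S\<subseteq>{0..<N}. card S = i \<and> k_dense E k S)"
    and ns: "\<not> (\<exists>S\<subseteq>{0..<N}. card S = j \<and> k_sparse E k S)"
    unfolding good_def by blast
  define E' where "E' u v = (E u v \<and> u < m \<and> v < m)" for u v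
  have sg': "simple_graph {0..<m} E'"
    using sg unfolding simple_graph_def E'_def by auto
  from sp obtain K I where KI: "K \<union> I = {0..<N}" "K \<inter> I = {}"
      "\<forall>u\<in>K. \<forall>v\<in>K. u \<noteq> v \<longrightarrow> E u v" "\<forall>u\<in>I. \<forall>v\<in>I. \<not> E u v"
    unfolding split_graph_def by blast
  have sp': "split_graph {0..<m} E'"
    unfolding split_graph_def
    apply (rule exI[of _ "K \<inter> {0..<m}"], rule exI[of _ "I \<inter> {0..<m}"])
    using KI mN unfolding E'_def by auto
  have agree: "\<And>S v. S \<subseteq> {0..<m} \<Longrightarrow> v \<in> S \<Longrightarrow> {u\<in>S. E' v u} = {u\<in>S. E v u}"
    unfolding E'_def by auto
  have agreec: "\<And>S v. S \<subseteq> {0..<m} \<Longrightarrow> v \<in> S \<Longrightarrow>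
      {u\<in>S. compl_graph E' v u} = {u\<in>S. compl_graph E v u}"
    unfolding E'_def compl_graph_def by auto
  have sub: "{0..<m} \<subseteq> {0..<N}" using mN by auto
  from g sg' sp' have "(\<exists>S\<subseteq>{0..<m}. card S = i \<and> k_dense E' k S) \<or>
      (\<exists>S\<subseteq>{0..<m}. card S = j \<and> k_sparse E' k S)"
    unfolding good_def by blast
  then show False
  proof
    assume "\<exists>S\<subseteq>{0..<m}. card S = i \<and> k_dense E' k S"
    then obtain S where S: "S \<subseteq> {0..<m}" "card S = i" "k_dense E' k S" by blast
    then have "k_dense E k S" unfolding k_dense_def k_sparse_def using agreec by simp
    then show False using nd S sub by blast
  next
    assume "\<exists>S\<subseteq>{0..<m}. card S = j \<and> k_sparse E' k S"
    then obtain S where S: "S \<subseteq> {0..<m}" "card S = j" "k_sparse E' k S" by blast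
    then have "k_sparse E k S" unfolding k_sparse_def using agree by simp
    then show False using ns S sub by blast
  qed
qed

definition mkG :: "nat \<Rightarrow> (nat \<times> nat) list \<Rightarrow> nat \<Rightarrow> nat \<Rightarrow> bool" where
  "mkG a L u v \<longleftrightarrow> (u < a \<and> v < a \<and> u \<noteq> v) \<or> (u, v) \<in> set L \<or> (v, u) \<in> set L"

lemma card_filter_upt: "card {w\<in>{a..<m}. P w} = length (filter P [a..<m])"
proof -
  have "{w\<in>{a..<m}. P w} = set (filter P [a..<m])" by auto
  then show ?thesis by (metis distinct_card distinct_filter distinct_upt)
qed

lemma bad_graph:
  assumes L: "\<forall>p\<in>set L. fst p < a \<and> a \<le> snd p \<and> snd p < m" and am: "a \<le> m"
    and X: "length X + m < j + a"
    and dX: "\<forall>v\<in>set [0..<a]. v \<notin> set X \<longrightarrow> k + (m - a) + 1 < length (filter (mkG a L v) [a..<m]) + j"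
    and Y: "length Y + a < i"
    and dY: "\<forall>w\<in>set [a..<m]. w \<notin> set Y \<longrightarrow> k + a + 1 < length (filter (\<lambda>v. \<not> mkG a L w v) [0..<a]) + i"
  shows "\<not> good k i j m"
proof -
  let ?E = "mkG a L"
  let ?K = "{0..<a}" and ?I = "{a..<m}"
  have KI: "?K \<union> ?I = {0..<m}" "?K \<inter> ?I = {}" using am by auto
  have cl: "\<forall>u\<in>?K. \<forall>v\<in>?K. u \<noteq> v \<longrightarrow> ?E u v" unfolding mkG_def by auto
  have ind: "\<forall>u\<in>?I. \<forall>v\<in>?I. \<not> ?E u v" using L unfolding mkG_def by fastforce
  have sg: "simple_graph {0..<m} ?E"
    unfolding simple_graph_def using L am unfolding mkG_def by fastforce
  have sp: "split_graph {0..<m} ?E"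
    unfolding split_graph_def using KI cl ind by blast
  have cKX: "card (?K - (?K - set X)) \<le> length X"
  proof -
    have "card (?K - (?K - set X)) \<le> card (set X)" by (rule card_mono) auto
    also have "\<dots> \<le> length X" by (rule card_length)
    finally show ?thesis .
  qed
  have cIY: "card (?I - (?I - set Y)) \<le> length Y"
  proof -
    have "card (?I - (?I - set Y)) \<le> card (set Y)" by (rule card_mono) auto
    also have "\<dots> \<le> length Y" by (rule card_length)
    finally show ?thesis .
  qed
  have nd: "\<not> k_dense ?E k S" if "S \<subseteq> {0..<m}" "card S = i" for S
  proof (rule no_dense_set[where K="?K" and I="?I" and D="?I - set Y"])
    show "\<forall>u\<in>?I. \<forall>v\<in>?I. \<not> ?E u v" by (rule ind)
    show "card (?I - (?I - set Y)) + card ?K < i" using cIY Y by simp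
    show "\<forall>w\<in>?I \<inter> (?I - set Y). k + card ?K + 1 < card {v\<in>?K. \<not> ?E w v} + i"
    proof
      fix w assume "w \<in> ?I \<inter> (?I - set Y)"
      then have "w \<in> set [a..<m]" "w \<notin> set Y" by auto
      then have "k + a + 1 < length (filter (\<lambda>v. \<not> ?E w v) [0..<a]) + i" using dY by blast
      then show "k + card ?K + 1 < card {v\<in>?K. \<not> ?E w v} + i"
        using card_filter_upt[of 0 a "\<lambda>v. \<not> ?E w v"] by simp
    qed
  qed (use that KI in auto)
  have ns: "\<not> k_sparse ?E k S" if "S \<subseteq> {0..<m}" "card S = j" for S
  proof (rule no_sparse_set[where K="?K" and I="?I" and D="?K - set X"])
    show "\<forall>u\<in>?K. \<forall>v\<in>?K. u \<noteq> v \<longrightarrow> ?E u v" by (rule cl)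
    show "card (?K - (?K - set X)) + card ?I < j" using cKX X am by simp
    show "\<forall>v\<in>?K \<inter> (?K - set X). k + card ?I + 1 < card {w\<in>?I. ?E v w} + j"
    proof
      fix v assume "v \<in> ?K \<inter> (?K - set X)"
      then have "v \<in> set [0..<a]" "v \<notin> set X" by auto
      then have "k + (m - a) + 1 < length (filter (?E v) [a..<m]) + j" using dX by blast
      then show "k + card ?I + 1 < card {w\<in>?I. ?E v w} + j"
        using card_filter_upt[of a m "?E v"] by simp
    qed
  qed (use that KI in auto)
  show ?thesis unfolding good_def using sg sp nd ns by blast
qed



lemma split_setup:
  assumes sg: "simple_graph {0..<n} E" and sp: "split_graph {0..<n} E"
  obtains K I where "K \<union> I = {0..<n}" "K \<inter> I = {}"
      "\<forall>u\<in>K. \<forall>v\<in>K. u \<noteq> v \<longrightarrow> E u v" "\<forall>u\<in>I. \<forall>v\<in>I. \<not> E u v"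
      "finite K" "finite I" "card K + card I = n"
proof -
  from sp obtain K I where KI: "K \<union> I = {0..<n}" "K \<inter> I = {}"
      "\<forall>u\<in>K. \<forall>v\<in>K. u \<noteq> v \<longrightarrow> E u v" "\<forall>u\<in>I. \<forall>v\<in>I. \<not> E u v"
    unfolding split_graph_def by blast
  have f: "finite K" "finite I" using KI(1) by (metis finite_Un finite_atLeastLessThan)+
  have "card K + card I = n" using KI(1,2) f by (metis card_Un_disjoint card_atLeastLessThan diff_zero)
  then show ?thesis using that KI f by blast
qed

lemma big_clique:
  assumes "\<forall>u\<in>K. \<forall>v\<in>K. u \<noteq> v \<longrightarrow> E u v" "finite K" "i \<le> card K" "K \<subseteq> V"
  shows "\<exists>S\<subseteq>V. card S = i \<and> k_dense E k S"
proof -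
  obtain S where "S \<subseteq> K" "card S = i" using assms obtain_subset_with_card_n by metis
  then show ?thesis using clique_dense[OF assms(1)] assms(4) by blast
qed

lemma big_indep:
  assumes "\<forall>u\<in>I. \<forall>v\<in>I. \<not> E u v" "finite I" "j \<le> card I" "I \<subseteq> V"
  shows "\<exists>S\<subseteq>V. card S = j \<and> k_sparse E k S"
proof -
  obtain S where "S \<subseteq> I" "card S = j" using assms obtain_subset_with_card_n by metis
  then show ?thesis using indep_sparse[OF assms(1)] assms(4) by blast
qed

lemma typeA:
  assumes sg: "simple_graph {0..<n} E" and sp: "split_graph {0..<n} E"
    and n: "n + 2 = i + j" and k: "1 \<le> k" "k + 2 \<le> i" "1 \<le> j"
    and ineq: "(j - 1) * (i - k - 2) < (i - 1) * (k + 1)"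
  shows "(\<exists>S\<subseteq>{0..<n}. card S = i \<and> k_dense E k S) \<or> (\<exists>S\<subseteq>{0..<n}. card S = j \<and> k_sparse E k S)"
proof -
  note g = sg_facts[OF sg]
  obtain K I where KI: "K \<union> I = {0..<n}" "K \<inter> I = {}"
      "\<forall>u\<in>K. \<forall>v\<in>K. u \<noteq> v \<longrightarrow> E u v" "\<forall>u\<in>I. \<forall>v\<in>I. \<not> E u v"
      "finite K" "finite I" "card K + card I = n"
    using split_setup[OF sg sp] by blast
  have KV: "K \<subseteq> {0..<n}" and IV: "I \<subseteq> {0..<n}" using KI(1) by auto
  show ?thesis
  proof (cases "i \<le> card K")
    case True then show ?thesis using big_clique[OF KI(3) KI(5) True KV] by blast
  next
    case cK: False
    show ?thesis
    proof (cases "j \<le> card I")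
      case True then show ?thesis using big_indep[OF KI(4) KI(6) True IV] by blast
    next
      case cI: False
      have cK': "card K = i - 1" and cI': "card I = j - 1" using cK cI KI(7) n by linarith+
      show ?thesis
      proof (cases "\<exists>w\<in>I. card {v\<in>K. \<not> E w v} \<le> k")
        case True
        then obtain w where w: "w \<in> I" "card {v\<in>K. \<not> E w v} \<le> k" by blast
        have "k_dense E k (K \<union> {w})"
          by (rule dense_union) (use g(2) KI w k in auto)
        moreover have "card (K \<union> {w}) = i" using w KI cK' k by (auto simp: card_insert_if)
        moreover have "K \<union> {w} \<subseteq> {0..<n}" using KV IV w by auto
        ultimately show ?thesis by blast
      next
        case nW: False
        show ?thesis
        proof (cases "\<exists>v\<in>K. card {w\<in>I. E v w} \<le> k")
          case True
          then obtain v where v: "v \<in> K" "card {w\<in>I. E v w} \<le> k" by blast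
          have "k_sparse E k (I \<union> {v})"
            by (rule sparse_union) (use g(2,3) KI v k in auto)
          moreover have "card (I \<union> {v}) = j" using v KI cI' k by (auto simp: card_insert_if)
          moreover have "I \<union> {v} \<subseteq> {0..<n}" using KV IV v by auto
          ultimately show ?thesis by blast
        next
          case nU: False
          have up: "card {v\<in>K. E w v} \<le> i - k - 2" if "w \<in> I" for w
          proof -
            have "card {v\<in>K. E w v} + card {v\<in>K. \<not> E w v} = card K"
              by (rule card_split_filter) (rule KI(5))
            moreover have "k + 1 \<le> card {v\<in>K. \<not> E w v}" using nW that by force
            ultimately show ?thesis using cK' by linarith
          qed
          have lo: "k + 1 \<le> card {w\<in>I. E v w}" if "v \<in> K" for v
          proof -
            have "\<not> card {w\<in>I. E v w} \<le> k" using nU that by blast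
            then show ?thesis by linarith
          qed
          have "(\<Sum>w\<in>I. card {v\<in>K. E w v}) \<le> card I * (i - k - 2)"
            using sum_bounded_above[of I "\<lambda>w. card {v\<in>K. E w v}" "i - k - 2"] up by simp
          moreover have "card K * (k + 1) \<le> (\<Sum>v\<in>K. card {w\<in>I. E v w})"
            using sum_bounded_below[of K "k + 1" "\<lambda>v. card {w\<in>I. E v w}"] lo by simp
          moreover have "(\<Sum>v\<in>K. card {w\<in>I. E v w}) = (\<Sum>w\<in>I. card {v\<in>K. E w v})"
            by (rule double_count) (use g(2) KI in auto)
          ultimately have "(i - 1) * (k + 1) \<le> (j - 1) * (i - k - 2)"
            using cK' cI' by (simp add: mult.commute)
          then show ?thesis using ineq by linarith
        qed
      qed
    qed
  qed
qed


lemma typeB: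
  assumes sg: "simple_graph {0..<n} E" and sp: "split_graph {0..<n} E"
    and n: "n = j + 2" and j: "6 \<le> j" "j \<le> 7"
  shows "(\<exists>S\<subseteq>{0..<n}. card S = 5 \<and> k_dense E 2 S) \<or> (\<exists>S\<subseteq>{0..<n}. card S = j \<and> k_sparse E 2 S)"
proof -
  note g = sg_facts[OF sg]
  obtain K I where KI: "K \<union> I = {0..<n}" "K \<inter> I = {}"
      "\<forall>u\<in>K. \<forall>v\<in>K. u \<noteq> v \<longrightarrow> E u v" "\<forall>u\<in>I. \<forall>v\<in>I. \<not> E u v"
      "finite K" "finite I" "card K + card I = n"
    using split_setup[OF sg sp] by blast
  have KV: "K \<subseteq> {0..<n}" and IV: "I \<subseteq> {0..<n}" using KI(1) by auto
  have dc: "(\<Sum>v\<in>K. card {w\<in>I. E v w}) = (\<Sum>w\<in>I. card {v\<in>K. E w v})"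
    by (rule double_count) (use g(2) KI in auto)
  have part: "card {v\<in>K. E w v} + card {v\<in>K. \<not> E w v} = card K" for w
    by (rule card_split_filter) (rule KI(5))
  show ?thesis
  proof (cases "5 \<le> card K")
    case True then show ?thesis using big_clique[OF KI(3) KI(5) True KV] by blast
  next
    case cK: False
    show ?thesis
    proof (cases "j \<le> card I")
      case True then show ?thesis using big_indep[OF KI(4) KI(6) True IV] by blast
    next
      case cI: False
      have "card K = 4 \<or> card K = 3" using cK cI KI(7) n by linarith
      then show ?thesis
      proof
        assume cK4: "card K = 4"
        show ?thesis
        proof (cases "\<exists>w\<in>I. card {v\<in>K. \<not> E w v} \<le> 2")
          case True
          then obtain w where w: "w \<in> I" "card {v\<in>K. \<not> E w v} \<le> 2" by blast
          have "k_dense E 2 (K \<union> {w})"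
            by (rule dense_union) (use g(2) KI w in auto)
          moreover have "card (K \<union> {w}) = 5" using w KI cK4 by (auto simp: card_insert_if)
          moreover have "K \<union> {w} \<subseteq> {0..<n}" using KV IV w by auto
          ultimately show ?thesis by blast
        next
          case nW: False
          have up: "card {v\<in>K. E w v} \<le> 1" if "w \<in> I" for w
          proof -
            have "\<not> card {v\<in>K. \<not> E w v} \<le> 2" using nW that by blast
            then show ?thesis using part[of w] cK4 by linarith
          qed
          have sI: "(\<Sum>w\<in>I. card {v\<in>K. E w v}) \<le> card I"
            using sum_bounded_above[of I "\<lambda>w. card {v\<in>K. E w v}" 1] up by simp
          show ?thesis
          proof (cases "\<exists>u\<in>K. \<exists>v\<in>K. u \<noteq> v \<and> card {w\<in>I. E u w} \<le> 1 \<and> card {w\<in>I. E v w} \<le> 1")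
            case True
            then obtain u v where uv: "u \<in> K" "v \<in> K" "u \<noteq> v"
              "card {w\<in>I. E u w} \<le> 1" "card {w\<in>I. E v w} \<le> 1" by blast
            have uI: "u \<notin> I" "v \<notin> I" using uv(1,2) KI(2) by blast+
            have c2: "card {u, v} = 2" using uv(3) by simp
            have "k_sparse E 2 (I \<union> {u, v})"
            proof (rule sparse_union)
              show "I \<inter> {u, v} = {}" using uI by blast
              show "card {u, v} \<le> 2" using c2 by simp
              show "\<forall>x\<in>{u, v}. card {u, v} - 1 + card {w \<in> I. E x w} \<le> 2"
                using c2 uv(4,5) by simp
            qed (use g(2,3) KI(4,6) in auto)
            moreover have "card (I \<union> {u, v}) = j"
            proof -
              have "card (I \<union> {u, v}) = card I + 2" using uI uv(3) KI(6) by simp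
              moreover have "card I + 2 = j" using cI cK4 KI(7) n by linarith
              ultimately show ?thesis by simp
            qed
            moreover have "I \<union> {u, v} \<subseteq> {0..<n}" using KV IV uv by auto
            ultimately show ?thesis by blast
          next
            case nU: False
            define T where "T = {v\<in>K. card {w\<in>I. E v w} \<le> 1}"
            have TK: "T \<subseteq> K" unfolding T_def by blast
            have fT: "finite T" using TK KI(5) finite_subset by blast
            have cT: "card T \<le> 1"
            proof -
              have "\<forall>a\<in>T. \<forall>b\<in>T. a = b" using nU unfolding T_def by blast
              then show ?thesis using card_le_Suc0_iff_eq[OF fT] by simp
            qed
            have lo: "2 \<le> card {w\<in>I. E v w}" if "v \<in> K - T" for v
            proof -
              have "v \<in> K" "v \<notin> T" using that by auto
              then have "\<not> card {w\<in>I. E v w} \<le> 1" unfolding T_def by blast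
              then show ?thesis by linarith
            qed
            have "card (K - T) * 2 \<le> (\<Sum>v\<in>K - T. card {w\<in>I. E v w})"
              using sum_bounded_below[of "K - T" 2 "\<lambda>v. card {w\<in>I. E v w}"] lo by simp
            also have "\<dots> \<le> (\<Sum>v\<in>K. card {w\<in>I. E v w})"
              by (rule sum_mono2) (use KI(5) in auto)
            finally have s1: "card (K - T) * 2 \<le> (\<Sum>v\<in>K. card {w\<in>I. E v w})" .
            have s2: "card (K - T) = card K - card T" using TK fT by (simp add: card_Diff_subset)
            have s3: "card I \<le> 5" using cK4 KI(7) n j by simp
            have s4: "card (K - T) \<ge> 3" using s2 cT cK4 by simp
            have "6 \<le> (\<Sum>v\<in>K. card {w\<in>I. E v w})" using s1 s4 by linarith
            then have "6 \<le> card I" using sI dc by linarith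
            then show ?thesis using s3 by simp
          qed
        qed
      next
        assume cK3: "card K = 3"
        show ?thesis
        proof (cases "\<exists>v\<in>K. card {w\<in>I. E v w} \<le> 2")
          case True
          then obtain v where v: "v \<in> K" "card {w\<in>I. E v w} \<le> 2" by blast
          have "k_sparse E 2 (I \<union> {v})"
            by (rule sparse_union) (use g(2,3) KI v in auto)
          moreover have "card (I \<union> {v}) = j" using v KI cK3 n by (auto simp: card_insert_if)
          moreover have "I \<union> {v} \<subseteq> {0..<n}" using KV IV v by auto
          ultimately show ?thesis by blast
        next
          case nU: False
          have lo: "3 \<le> card {w\<in>I. E v w}" if "v \<in> K" for v
          proof -
            have "\<not> card {w\<in>I. E v w} \<le> 2" using nU that by blast
            then show ?thesis by linarith
          qed
          have sK: "card K * 3 \<le> (\<Sum>v\<in>K. card {w\<in>I. E v w})"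
            using sum_bounded_below[of K 3 "\<lambda>v. card {w\<in>I. E v w}"] lo by simp
          show ?thesis
          proof (cases "\<exists>u\<in>I. \<exists>v\<in>I. u \<noteq> v \<and> card {x\<in>K. \<not> E u x} \<le> 1 \<and> card {x\<in>K. \<not> E v x} \<le> 1")
            case True
            then obtain u v where uv: "u \<in> I" "v \<in> I" "u \<noteq> v"
              "card {x\<in>K. \<not> E u x} \<le> 1" "card {x\<in>K. \<not> E v x} \<le> 1" by blast
            have uK: "u \<notin> K" "v \<notin> K" using uv(1,2) KI(2) by blast+
            have c2: "card {u, v} = 2" using uv(3) by simp
            have "k_dense E 2 (K \<union> {u, v})"
            proof (rule dense_union)
              show "K \<inter> {u, v} = {}" using uK by blast
              show "card {u, v} \<le> 2" using c2 by simp
              show "\<forall>x\<in>{u, v}. card {u, v} - 1 + card {y \<in> K. \<not> E x y} \<le> 2"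
                using c2 uv(4,5) by simp
              show "\<forall>x\<in>{u, v}. \<forall>y\<in>{u, v}. \<not> E x y" using KI(4) uv(1,2) by blast
            qed (use g(2) KI(3,5) in auto)
            moreover have "card (K \<union> {u, v}) = 5"
            proof -
              have "card (K \<union> {u, v}) = card K + 2" using uK uv(3) KI(5) by simp
              then show ?thesis using cK3 by simp
            qed
            moreover have "K \<union> {u, v} \<subseteq> {0..<n}" using KV IV uv by auto
            ultimately show ?thesis by blast
          next
            case nW: False
            define T where "T = {w\<in>I. card {x\<in>K. \<not> E w x} \<le> 1}"
            have TI: "T \<subseteq> I" unfolding T_def by blast
            have fT: "finite T" using TI KI(6) finite_subset by blast
            have cT: "card T \<le> 1"
            proof -
              have "\<forall>a\<in>T. \<forall>b\<in>T. a = b" using nW unfolding T_def by blast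
              then show ?thesis using card_le_Suc0_iff_eq[OF fT] by simp
            qed
            have up1: "card {v\<in>K. E w v} \<le> 1" if "w \<in> I - T" for w
            proof -
              have "w \<in> I" "w \<notin> T" using that by auto
              then have "\<not> card {x\<in>K. \<not> E w x} \<le> 1" unfolding T_def by blast
              then show ?thesis using part[of w] cK3 by linarith
            qed
            have up3: "card {v\<in>K. E w v} \<le> 3" if "w \<in> T" for w
              using part[of w] cK3 by linarith
            have "(\<Sum>w\<in>I. card {v\<in>K. E w v}) = (\<Sum>w\<in>I - T. card {v\<in>K. E w v}) + (\<Sum>w\<in>T. card {v\<in>K. E w v})"
              by (rule sum.subset_diff[OF TI KI(6)])
            moreover have "(\<Sum>w\<in>I - T. card {v\<in>K. E w v}) \<le> card (I - T)"
              using sum_bounded_above[of "I - T" "\<lambda>w. card {v\<in>K. E w v}" 1] up1 by simp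
            moreover have "(\<Sum>w\<in>T. card {v\<in>K. E w v}) \<le> card T * 3"
              using sum_bounded_above[of T "\<lambda>w. card {v\<in>K. E w v}" 3] up3 by simp
            moreover have "card (I - T) = card I - card T" using TI fT by (simp add: card_Diff_subset)
            moreover have "card T \<le> card I" using TI KI(6) by (simp add: card_mono)
            ultimately have t1: "(\<Sum>w\<in>I. card {v\<in>K. E w v}) \<le> card I + 2 * card T" by linarith
            have t2: "card I \<le> 6" using cK3 KI(7) n j by simp
            have "9 \<le> (\<Sum>w\<in>I. card {v\<in>K. E w v})" using sK dc cK3 by simp
            then show ?thesis using t1 t2 cT by linarith
          qed
        qed
      qed
    qed
  qed
qed


lemma R_from:
  assumes "good k i j n" "\<not> good k i j (n - 1)" "0 < n"
  shows "R_split k i j = n"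
proof (rule R_eq)
  show "good k i j n" by (rule assms(1))
  fix m assume "m < n"
  then have "m \<le> n - 1" by simp
  then show "\<not> good k i j m" by (rule bad_mono[OF assms(2)])
qed

lemma goodA:
  assumes "n + 2 = i + j" "1 \<le> k" "k + 2 \<le> i" "1 \<le> j"
    "(j - 1) * (i - k - 2) < (i - 1) * (k + 1)"
  shows "good k i j n"
  unfolding good_def using typeA[OF _ _ assms] by blast

lemma goodB:
  assumes "n = j + 2" "6 \<le> j" "j \<le> 7"
  shows "good 2 5 j n"
  unfolding good_def using typeB[OF _ _ assms] by blast

lemma F1_bad:
  assumes "m = j + 2" "8 \<le> j" "\<forall>v\<in>set [4..<m]. v \<notin> set [] \<longrightarrow> 2 + 4 + 1 < length (filter (\<lambda>u. \<not> mkG 4 [(0,4),(0,5),(1,6),(1,7),(2,8),(2,9)] v u) [0..<4]) + 5"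
    "\<forall>v\<in>set [0..<4]. v \<notin> set [3] \<longrightarrow> 2 + (m - 4) + 1 < length (filter (mkG 4 [(0,4),(0,5),(1,6),(1,7),(2,8),(2,9)] v) [4..<m]) + j"
  shows "\<not> good 2 5 j m"
  by (rule bad_graph[where a=4 and L="[(0,4),(0,5),(1,6),(1,7),(2,8),(2,9)]" and X="[3]" and Y="[]"])
     (use assms in auto)

lemma R258: "R_split 2 5 8 = 11"
  by (rule R_from[OF goodA]) (simp_all, rule F1_bad, simp_all add: mkG_def upt_rec)
lemma R259: "R_split 2 5 9 = 12"
  by (rule R_from[OF goodA]) (simp_all, rule F1_bad, simp_all add: mkG_def upt_rec)
lemma R2510: "R_split 2 5 10 = 13"
  by (rule R_from[OF goodA]) (simp_all, rule F1_bad, simp_all add: mkG_def upt_rec)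
lemma R2511: "R_split 2 5 11 = 14"
  by (rule R_from[OF goodA]) (simp_all, rule F1_bad, simp_all add: mkG_def upt_rec)
lemma R2512: "R_split 2 5 12 = 15"
  by (rule R_from[OF goodA]) (simp_all, rule F1_bad, simp_all add: mkG_def upt_rec)

lemma R145: "R_split 1 4 5 = 7"
proof (rule R_from[OF goodA])
  show "\<not> good 1 4 5 (7 - 1)"
    by (simp, rule bad_graph[where a=2 and L="[(0,3),(1,4),(0,5),(1,5)]" and X="[]" and Y="[5]"])
       (simp_all add: mkG_def upt_rec)
qed simp_all

lemma R146: "R_split 1 4 6 = 8"
proof (rule R_from[OF goodA])
  show "\<not> good 1 4 6 (8 - 1)"
    by (simp, rule bad_graph[where a=2 and L="[(0,4),(1,5),(0,6),(1,6)]" and X="[]" and Y="[6]"])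
       (simp_all add: mkG_def upt_rec)
qed simp_all

lemma R256: "R_split 2 5 6 = 8"
proof (rule R_from[OF goodB])
  show "\<not> good 2 5 6 (8 - 1)"
    by (simp, rule bad_graph[where a=2 and L="[(0,3),(1,4),(0,5),(1,5),(0,6),(1,6)]" and X="[]" and Y="[5,6]"])
       (simp_all add: mkG_def upt_rec)
qed simp_all

lemma R257: "R_split 2 5 7 = 9"
proof (rule R_from[OF goodB])
  show "\<not> good 2 5 7 (9 - 1)"
    by (simp, rule bad_graph[where a=2 and L="[(0,4),(1,5),(0,6),(1,6),(0,7),(1,7)]" and X="[]" and Y="[6,7]"])
       (simp_all add: mkG_def upt_rec)
qed simp_all

lemma R267: "R_split 2 6 7 = 11"
proof (rule R_from[OF goodA])
  show "\<not> good 2 6 7 (11 - 1)"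
    by (simp, rule bad_graph[where a=4 and L="[(0,5),(1,5),(0,6),(1,6),(2,7),(3,7),(2,8),(3,8),(0,9),(1,9),(2,9),(3,9)]" and X="[]" and Y="[9]"])
       (simp_all add: mkG_def upt_rec)
qed simp_all

lemma R268: "R_split 2 6 8 = 12"
proof (rule R_from[OF goodA])
  show "\<not> good 2 6 8 (12 - 1)"
    by (simp, rule bad_graph[where a=4 and L="[(0,6),(1,6),(0,7),(1,7),(2,8),(3,8),(2,9),(3,9),(0,10),(1,10),(2,10),(3,10)]" and X="[]" and Y="[10]"])
       (simp_all add: mkG_def upt_rec)
qed simp_all

theorem theorem6p4:
  shows "(R_split 1 4 5 = 7 \<and> R_split 1 4 6 = 8) \<and>
         (R_split 2 6 7 = 11 \<and> R_split 2 6 8 = 12) \<and>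
         (R_split 2 5 6 = 8 \<and> R_split 2 5 7 = 9) \<and>
         (\<forall>j::nat. 8 \<le> j \<and> j \<le> 12 \<longrightarrow> R_split 2 5 j = j + 3)"
proof -
  have "\<forall>j::nat. 8 \<le> j \<and> j \<le> 12 \<longrightarrow> R_split 2 5 j = j + 3"
  proof (intro allI impI)
    fix j :: nat assume "8 \<le> j \<and> j \<le> 12"
    then have "j = 8 \<or> j = 9 \<or> j = 10 \<or> j = 11 \<or> j = 12" by linarith
    then show "R_split 2 5 j = j + 3" using R258 R259 R2510 R2511 R2512 by auto
  qed
  then show ?thesis using R145 R146 R267 R268 R256 R257 by blast
qed

end
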